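(* Let $N\ge 1$ be an integer and $a>0$ real. Let $H=H^{(N)}(a)$ be the real $N\times N$ tridiagonal matrix with entries $H_{nn}=a+2n-1$ ($n=1,\dots,N$), $H_{n,n+1}=-n$ and $H_{n+1,n}=-(a+n)$ ($n=1,\dots,N-1$), all other entries zero. Let $\Theta_0=\Theta_0^{(N)}(a)$ be the diagonal $N\times N$ matrix with $\theta_{11}=1$ and $$\theta_{nn}=\frac{(n-1)!}{(a+n-1)(a+n-2)\cdots(a+2)(a+1)},\qquad n=2,3,\dots,N.$$ Then $\Theta_0$ is positive definite and satisfies $H^\dagger\Theta_0=\Theta_0 H$, i.e. $\Theta_0$ is a (diagonal) metric making $H$ Hermitian in the inner product $\langle x,y\rangle_{\Theta_0}=x^\dagger\Theta_0 y$.
   Context: $H^\dagger$ denotes the conjugate transpose (here the transpose, $H$ being real). A metric for $H$ is a positive definite Hermitian matrix $\Theta$ with $H^\dagger\Theta=\Theta H$ (Dieudonné relation). *)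

theory Defs
  imports "Jordan_Normal_Form.Matrix"
begin

text \<open>Matrices are indexed from 0 in Jordan_Normal_Form; the paper's index n (1-based)
corresponds to index i = n - 1 here.\<close>

definition H_mat :: "nat \<Rightarrow> real \<Rightarrow> real mat" where
  "H_mat N a = mat N N (\<lambda>(i, j).
     if i = j then a + 2 * real (i + 1) - 1
     else if j = i + 1 then - real (i + 1)
     else if i = j + 1 then - (a + real (j + 1))
     else 0)"

definition theta0 :: "real \<Rightarrow> nat \<Rightarrow> real" where
  "theta0 a n = (if n = 1 then 1
                 else fact (n - 1) / (\<Prod>k = 1..n - 1. (a + real k)))"

definition Theta0_mat :: "nat \<Rightarrow> real \<Rightarrow> real mat" where
  "Theta0_mat N a = mat N N (\<lambda>(i, j). if i = j then theta0 a (i + 1) else 0)"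

text \<open>Positive definite Hermitian matrix (real case: Hermitian = symmetric).\<close>
definition pos_def_herm :: "real mat \<Rightarrow> bool" where
  "pos_def_herm A \<longleftrightarrow> square_mat A \<and> transpose_mat A = A \<and>
     (\<forall>x \<in> carrier_vec (dim_row A). x \<noteq> 0\<^sub>v (dim_row A) \<longrightarrow> x \<bullet> (A *\<^sub>v x) > 0)"

end

theory Submission
  imports Defs
begin

lemma theta_eq: "theta0 a n = fact (n - 1) / (\<Prod>k = 1..n - 1. (a + real k))"
  by (simp add: theta0_def)

lemma theta_pos: "a > 0 \<Longrightarrow> theta0 a n > 0"
  unfolding theta_eq by (intro divide_pos_pos prod_pos) auto

lemma theta_rec: "a > 0 \<Longrightarrow> theta0 a (n+2) * (a + real (n+1)) = theta0 a (n+1) * real (n+1)"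
proof -
  assume a: "a > 0"
  have p: "(\<Prod>k = 1..n+1. (a + real k)) = (\<Prod>k = 1..n. (a + real k)) * (a + real (n+1))"
    by (simp add: prod.nat_ivl_Suc')
  have "(\<Prod>k = 1..n. (a + real k)) > 0" using a by (intro prod_pos) auto
  moreover have "a + real (n+1) > 0" using a by simp
  ultimately have P: "(\<Prod>k = 1..n. (a + real k)) \<noteq> 0" "a + real (n+1) \<noteq> 0"
    by (metis less_irrefl)+
  have "theta0 a (n+2) = fact (n+1) / ((\<Prod>k = 1..n. (a + real k)) * (a + real (n+1)))"
    unfolding theta_eq using p by simp
  moreover have "theta0 a (n+1) = fact n / (\<Prod>k = 1..n. (a + real k))"
    unfolding theta_eq by simp
  ultimately show ?thesis using P
  proof -
    assume t2: "theta0 a (n+2) = fact (n+1) / ((\<Prod>k = 1..n. (a + real k)) * (a + real (n+1)))"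
      and t1: "theta0 a (n+1) = fact n / (\<Prod>k = 1..n. (a + real k))"
    define Q where "Q = (\<Prod>k = 1..n. (a + real k))"
    define q where "q = a + real (n+1)"
    have f: "(fact (n+1)::real) = real (n+1) * fact n" by (simp add: fact_Suc)
    have "theta0 a (n+2) * q = fact (n+1) / Q"
      using P unfolding t2 Q_def[symmetric] q_def[symmetric] by simp
    also have "\<dots> = theta0 a (n+1) * real (n+1)"
      unfolding t1 Q_def[symmetric] f by simp
    finally show ?thesis unfolding q_def .
  qed
qed

lemma diag_sum:
  assumes "j < (N::nat)"
  shows "(\<Sum>k = 0..<N. f k * (if k = j then c else (0::real))) = f j * c"
proof -
  have "(\<Sum>k = 0..<N. f k * (if k = j then c else (0::real))) = (\<Sum>k = 0..<N. if k = j then f k * c else 0)"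
    by (rule sum.cong) auto
  also have "\<dots> = f j * c" using assms by simp
  finally show ?thesis .
qed

lemma diag_sum2:
  assumes "i < (N::nat)"
  shows "(\<Sum>k = 0..<N. (if i = k then c else (0::real)) * f k) = c * f i"
proof -
  have "(\<Sum>k = 0..<N. (if i = k then c else (0::real)) * f k) = (\<Sum>k = 0..<N. if i = k then c * f k else 0)"
    by (rule sum.cong) auto
  also have "\<dots> = c * f i" using assms by simp
  finally show ?thesis .
qed

theorem lemma1:
  fixes N :: nat and a :: real
  assumes "N \<ge> 1" and "a > 0"
  shows "pos_def_herm (Theta0_mat N a) \<and>
         transpose_mat (H_mat N a) * Theta0_mat N a = Theta0_mat N a * H_mat N a"
proof
  show "pos_def_herm (Theta0_mat N a)"
    unfolding pos_def_herm_def
  proof (intro conjI ballI impI)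
    show "square_mat (Theta0_mat N a)" by (simp add: Theta0_mat_def)
    show "transpose_mat (Theta0_mat N a) = Theta0_mat N a"
      by (rule eq_matI) (auto simp: Theta0_mat_def)
    fix x :: "real vec"
    assume x: "x \<in> carrier_vec (dim_row (Theta0_mat N a))"
      and nz: "x \<noteq> 0\<^sub>v (dim_row (Theta0_mat N a))"
    have dr: "dim_row (Theta0_mat N a) = N" by (simp add: Theta0_mat_def)
    have dx: "dim_vec x = N" using x by (simp add: Theta0_mat_def)
    have mv: "\<And>i. i < N \<Longrightarrow> (Theta0_mat N a *\<^sub>v x) $ i = theta0 a (i+1) * x $ i"
    proof -
      fix i assume i: "i < N"
      have "(Theta0_mat N a *\<^sub>v x) $ i = row (Theta0_mat N a) i \<bullet> x"
        using i by (simp add: Theta0_mat_def)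
      also have "\<dots> = (\<Sum>k = 0..<N. (if i = k then theta0 a (i+1) else 0) * x $ k)"
        unfolding scalar_prod_def using i dx by (simp add: Theta0_mat_def)
      also have "\<dots> = theta0 a (i+1) * x $ i" using i by (rule diag_sum2)
      finally show "(Theta0_mat N a *\<^sub>v x) $ i = theta0 a (i+1) * x $ i" .
    qed
    obtain i where i: "i < N" "x $ i \<noteq> 0"
      using nz dx by (auto simp: Theta0_mat_def vec_eq_iff)
    have "x \<bullet> (Theta0_mat N a *\<^sub>v x) = (\<Sum>k = 0..<N. theta0 a (k+1) * (x $ k)^2)"
      unfolding scalar_prod_def dim_mult_mat_vec dr dx
      by (intro sum.cong) (auto simp: mv power2_eq_square)
    also have "\<dots> > 0"
      by (rule sum_pos2[of _ i]) (auto simp: i less_imp_le[OF theta_pos[OF assms(2)]] theta_pos[OF assms(2)])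
    finally show "x \<bullet> (Theta0_mat N a *\<^sub>v x) > 0" .
  qed
  show "transpose_mat (H_mat N a) * Theta0_mat N a = Theta0_mat N a * H_mat N a"
  proof (rule eq_matI)
    fix i j assume ij: "i < dim_row (Theta0_mat N a * H_mat N a)"
      "j < dim_col (Theta0_mat N a * H_mat N a)"
    hence i: "i < N" and j: "j < N" by (auto simp: Theta0_mat_def H_mat_def)
    have dH: "dim_row (H_mat N a) = N" "dim_col (H_mat N a) = N" by (simp_all add: H_mat_def)
    have dT: "dim_row (Theta0_mat N a) = N" "dim_col (Theta0_mat N a) = N" by (simp_all add: Theta0_mat_def)
    have th_idx: "\<And>p q. p < N \<Longrightarrow> q < N \<Longrightarrow> Theta0_mat N a $$ (p, q) = (if p = q then theta0 a (p+1) else 0)"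
      by (simp add: Theta0_mat_def)
    have l: "(transpose_mat (H_mat N a) * Theta0_mat N a) $$ (i, j) = H_mat N a $$ (j, i) * theta0 a (j+1)"
    proof -
      have "(transpose_mat (H_mat N a) * Theta0_mat N a) $$ (i, j)
         = (\<Sum>k = 0..<N. H_mat N a $$ (k, i) * (if k = j then theta0 a (j+1) else 0))"
        using i j by (simp add: dH dT scalar_prod_def th_idx) (rule sum.cong, auto)
      also have "\<dots> = H_mat N a $$ (j, i) * theta0 a (j+1)" using j by (rule diag_sum)
      finally show ?thesis .
    qed
    have r: "(Theta0_mat N a * H_mat N a) $$ (i, j) = theta0 a (i+1) * H_mat N a $$ (i, j)"
    proof -
      have "(Theta0_mat N a * H_mat N a) $$ (i, j)
         = (\<Sum>k = 0..<N. (if i = k then theta0 a (i+1) else 0) * H_mat N a $$ (k, j))"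
        using i j by (simp add: dH dT scalar_prod_def th_idx) (rule sum.cong, auto)?
      also have "\<dots> = theta0 a (i+1) * H_mat N a $$ (i, j)" using i by (rule diag_sum2)
      finally show ?thesis .
    qed
    have "H_mat N a $$ (j, i) * theta0 a (j+1) = theta0 a (i+1) * H_mat N a $$ (i, j)"
    proof -
      consider "i = j" | "j = i + 1" | "i = j + 1" | "i \<noteq> j \<and> j \<noteq> i+1 \<and> i \<noteq> j+1" by blast
      then show ?thesis
      proof cases
        case 2
        then show ?thesis using i j theta_rec[OF assms(2), of i]
          by (simp add: H_mat_def mult.commute) (simp add: algebra_simps)?
      next
        case 3
        then show ?thesis using i j theta_rec[OF assms(2), of j]
          by (simp add: H_mat_def mult.commute) (simp add: algebra_simps)?
      qed (use i j in \<open>auto simp: H_mat_def\<close>)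
    qed
    then show "(transpose_mat (H_mat N a) * Theta0_mat N a) $$ (i, j) = (Theta0_mat N a * H_mat N a) $$ (i, j)"
      using l r by simp
  qed (auto simp: Theta0_mat_def H_mat_def)
qed

end
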